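(* Let $\mathbf P=(P,\leq,{}',0,1)$ be an atomic pseudo-orthomodular poset. Then every element of $\mathbf P$ is the join (in $\mathbf P$) of an orthogonal set of atoms lying under it, and $\mathbf P$ is atomistic.
   Context: For $M\subseteq P$, $U(M)$, $L(M)$ are the sets of upper and lower bounds; $U(a,b)=U(\{a,b\})$ etc. A poset with complementation is a bounded poset with antitone involution $'$ ($x\le y\Rightarrow y'\le x'$, $x''=x$) with $L(x,x')=\{0\}$, $U(x,x')=\{1\}$; it is pseudo-orthomodular if $L(U(L(x,y),y'),y)=L(x,y)$ for all $x,y$. A subset $S$ is orthogonal if $s\le t'$ for all distinct $s,t\in S$. An atom is a minimal element of $P\setminus\{0\}$; $\mathbf P$ is atomic if every $b>0$ lies above some atom, and atomistic if every element is the join of a set of atoms. *)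

theory Defs
  imports Main
begin

text \<open>The poset P is the carrier type 'a with its order; 0 = bot, 1 = top.\<close>

definition ub_set :: "'a::order set \<Rightarrow> 'a set" ("U") where
  "U M = {x. \<forall>m\<in>M. m \<le> x}"

definition lb_set :: "'a::order set \<Rightarrow> 'a set" ("L") where
  "L M = {x. \<forall>m\<in>M. x \<le> m}"

definition poset_with_complementation :: "('a::{order_bot,order_top} \<Rightarrow> 'a) \<Rightarrow> bool" where
  "poset_with_complementation c \<longleftrightarrow>
     (\<forall>x y. x \<le> y \<longrightarrow> c y \<le> c x) \<and> (\<forall>x. c (c x) = x) \<and>
     (\<forall>x. L {x, c x} = {bot}) \<and> (\<forall>x. U {x, c x} = {top})"

definition pseudo_orthomodular :: "('a::{order_bot,order_top} \<Rightarrow> 'a) \<Rightarrow> bool" where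
  "pseudo_orthomodular c \<longleftrightarrow>
     poset_with_complementation c \<and>
     (\<forall>x y. L (U (L {x, y} \<union> {c y}) \<union> {y}) = L {x, y})"

definition is_join :: "'a::order set \<Rightarrow> 'a \<Rightarrow> bool" where
  "is_join S a \<longleftrightarrow> a \<in> U S \<and> (\<forall>u\<in>U S. a \<le> u)"

definition orthogonal :: "('a::order \<Rightarrow> 'a) \<Rightarrow> 'a set \<Rightarrow> bool" where
  "orthogonal c S \<longleftrightarrow> (\<forall>s\<in>S. \<forall>t\<in>S. s \<noteq> t \<longrightarrow> s \<le> c t)"

definition atom :: "'a::order_bot \<Rightarrow> bool" where
  "atom a \<longleftrightarrow> a \<noteq> bot \<and> \<not> (\<exists>x. x \<noteq> bot \<and> x < a)"

definition atomic :: "'a::order_bot itself \<Rightarrow> bool" where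
  "atomic _ \<longleftrightarrow> (\<forall>b::'a. bot < b \<longrightarrow> (\<exists>a. atom a \<and> a \<le> b))"

definition atomistic :: "'a::order_bot itself \<Rightarrow> bool" where
  "atomistic _ \<longleftrightarrow> (\<forall>x::'a. \<exists>A. (\<forall>a\<in>A. atom a) \<and> is_join A x)"

end

theory Submission
  imports Defs
begin

lemma main_part:
  fixes c :: "'a::{order_bot,order_top} \<Rightarrow> 'a"
  assumes pc: "poset_with_complementation c"
    and po: "pseudo_orthomodular c"
    and at: "atomic TYPE('a)"
  shows "\<exists>A. (\<forall>a\<in>A. atom a \<and> a \<le> x) \<and> orthogonal c A \<and> is_join A x"
proof -
  have anti: "\<And>x y. x \<le> y \<Longrightarrow> c y \<le> c x" and inv: "\<And>x. c (c x) = x"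
    and Lc: "\<And>x. L {x, c x} = {bot}" and Uc: "\<And>x. U {x, c x} = {top}"
    using pc unfolding poset_with_complementation_def by auto
  have pom: "\<And>x y. L (U (L {x, y} \<union> {c y}) \<union> {y}) = L {x, y}"
    using po unfolding pseudo_orthomodular_def by auto
  have atm: "\<And>b::'a. b \<noteq> bot \<Longrightarrow> \<exists>a. atom a \<and> a \<le> b"
    using at unfolding atomic_def by (simp add: bot.not_eq_extremum)
  have cbot: "c bot = top"
  proof -
    have "c bot \<in> U {bot, c bot}" unfolding ub_set_def by auto
    thus ?thesis using Uc by auto
  qed
  have disj: "\<And>b v. b \<le> v \<Longrightarrow> b \<le> c v \<Longrightarrow> b = bot"
  proof -
    fix b v assume "b \<le> v" "b \<le> c v"
    hence "b \<in> L {v, c v}" unfolding lb_set_def by auto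
    thus "b = bot" using Lc by auto
  qed
  define S where "S = {A. (\<forall>a\<in>A. atom a \<and> a \<le> x) \<and> orthogonal c A}"
  have "\<exists>M\<in>S. \<forall>X\<in>S. M \<subseteq> X \<longrightarrow> X = M"
  proof (rule subset_Zorn')
    fix C assume ch: "subset.chain S C"
    hence CS: "C \<subseteq> S" and cmp: "\<And>X Y. X \<in> C \<Longrightarrow> Y \<in> C \<Longrightarrow> X \<subseteq> Y \<or> Y \<subseteq> X"
      unfolding subset.chain_def by auto
    have h1: "\<forall>a\<in>\<Union>C. atom a \<and> a \<le> x"
    proof
      fix a assume "a \<in> \<Union>C"
      then obtain X where "X \<in> C" "a \<in> X" by blast
      hence "X \<in> S" using CS by blast
      thus "atom a \<and> a \<le> x" using \<open>a \<in> X\<close> unfolding S_def by blast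
    qed
    have h2: "orthogonal c (\<Union>C)"
      unfolding orthogonal_def
    proof (intro ballI impI)
      fix s t assume "s \<in> \<Union>C" "t \<in> \<Union>C" "s \<noteq> t"
      then obtain X Y where XY: "X \<in> C" "Y \<in> C" "s \<in> X" "t \<in> Y" by auto
      from cmp[OF XY(1,2)] obtain Z where "Z \<in> C" "s \<in> Z" "t \<in> Z" using XY by auto
      hence "Z \<in> S" "s \<in> Z" "t \<in> Z" using CS by blast+
      thus "s \<le> c t" using \<open>s \<noteq> t\<close> unfolding S_def orthogonal_def by blast
    qed
    show "\<Union>C \<in> S" unfolding S_def using h1 h2 by blast
  qed
  then obtain A where AS: "A \<in> S" and maxA: "\<And>X. X \<in> S \<Longrightarrow> A \<subseteq> X \<Longrightarrow> X = A" by blast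
  have Aat: "\<forall>a\<in>A. atom a \<and> a \<le> x" and Aor: "orthogonal c A" using AS unfolding S_def by auto
  have "is_join A x"
    unfolding is_join_def
  proof (intro conjI ballI)
    show "x \<in> U A" using Aat unfolding ub_set_def by auto
  next
    fix u assume uU: "u \<in> U A"
    have top_all: "v = top" if vU: "v \<in> U (L {u, x} \<union> {c x})" for v
    proof (rule ccontr)
      assume "v \<noteq> top"
      hence "c v \<noteq> bot" using inv[of v] cbot by force
      then obtain b where b: "atom b" "b \<le> c v" using atm by blast
      have "c x \<le> v" using vU unfolding ub_set_def by auto
      hence "c v \<le> x" using anti[of "c x" v] inv[of x] by simp
      hence bx: "b \<le> x" using b by auto
      have aL: "a \<le> v" if "a \<in> A" for a
      proof -
        have "a \<le> u" using uU that unfolding ub_set_def by auto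
        moreover have "a \<le> x" using Aat that by auto
        ultimately have "a \<in> L {u, x}" unfolding lb_set_def by auto
        thus ?thesis using vU unfolding ub_set_def by auto
      qed
      have bA: "b \<notin> A"
      proof
        assume "b \<in> A" hence "b \<le> v" using aL by auto
        hence "b = bot" using disj b by auto
        thus False using b unfolding atom_def by auto
      qed
      have o1: "b \<le> c a" if "a \<in> A" for a
        using order_trans[OF b(2) anti[OF aL[OF that]]] .
      have o2: "a \<le> c b" if "a \<in> A" for a
        using anti[OF o1[OF that]] inv[of a] by simp
      have "orthogonal c (insert b A)"
        unfolding orthogonal_def
      proof (intro ballI impI)
        fix s t assume st: "s \<in> insert b A" "t \<in> insert b A" "s \<noteq> t"
        show "s \<le> c t"
        proof (cases "s = b")
          case True
          hence tA: "t \<in> A" using st(2,3) by blast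
          show ?thesis using o1[OF tA] by (simp only: True)
        next
          case False
          hence sA: "s \<in> A" using st(1) by blast
          show ?thesis
          proof (cases "t = b")
            case True show ?thesis using o2[OF sA] by (simp only: True)
          next
            case False
            hence "t \<in> A" using st(2) by blast
            thus ?thesis using Aor sA st(3) unfolding orthogonal_def by blast
          qed
        qed
      qed
      moreover have "\<forall>a\<in>insert b A. atom a \<and> a \<le> x" using Aat b bx by blast
      ultimately have "insert b A \<in> S" unfolding S_def by blast
      hence "insert b A = A" using maxA by blast
      thus False using bA by auto
    qed
    have "x \<in> L (U (L {u, x} \<union> {c x}) \<union> {x})"
    proof -
      have "\<forall>v\<in>U (L {u, x} \<union> {c x}) \<union> {x}. x \<le> v"
        using top_all by (metis UnE singletonD top_greatest order_refl)
      thus ?thesis unfolding lb_set_def[of "U (L {u, x} \<union> {c x}) \<union> {x}"] by blast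
    qed
    hence "x \<in> L {u, x}" using pom[of u x] by simp
    thus "x \<le> u" unfolding lb_set_def by auto
  qed
  thus ?thesis using Aat Aor by blast
qed

theorem proposition5:
  fixes c :: "'a::{order_bot,order_top} \<Rightarrow> 'a"
  assumes "poset_with_complementation c"
    and "pseudo_orthomodular c"
    and "atomic TYPE('a)"
  shows "(\<forall>x::'a. \<exists>A. (\<forall>a\<in>A. atom a \<and> a \<le> x) \<and> orthogonal c A \<and> is_join A x)
         \<and> atomistic TYPE('a)"
proof -
  have 1: "\<forall>x::'a. \<exists>A. (\<forall>a\<in>A. atom a \<and> a \<le> x) \<and> orthogonal c A \<and> is_join A x"
    using main_part[OF assms] by blast
  moreover have "atomistic TYPE('a)"
    unfolding atomistic_def
  proof
    fix x :: 'a
    obtain A where "\<forall>a\<in>A. atom a \<and> a \<le> x" "is_join A x" using 1 by blast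
    hence "(\<forall>a\<in>A. atom a) \<and> is_join A x" by simp
    thus "\<exists>A. (\<forall>a\<in>A. atom a) \<and> is_join A x" by (rule exI)
  qed
  ultimately show ?thesis by (rule conjI)
qed

end
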